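(* Consider $N$ agents $\mathcal{V}=\{1,\dots,N\}$ interacting over a fixed graph in which agent $i$ has the nonempty neighbor set $\mathcal{N}_i$ of cardinality $n_i$. Let $\beta\in[0,1)$ and let $(q_p(k))_{k\ge0}$ be any sequence with values in $\{-1,1\}$. The opinions evolve by $$\theta_i(k+1)=\theta_i(k)+\bigl(1-\theta_i(k)^2\bigr)\Bigl[\beta\bigl(q_p(k)-\theta_i(k)\bigr)+(1-\beta)\frac{1}{n_i}\sum_{j\in\mathcal{N}_i}\bigl(q_j(k)-\theta_i(k)\bigr)\Bigr],$$ with actions $q_j(k)=1$ if $\theta_j(k)>0$ or ($\theta_j(k)=0$ and $q_j(k-1)=1$), and $q_j(k)=-1$ if $\theta_j(k)<0$ or ($\theta_j(k)=0$ and $q_j(k-1)=-1$), and with $\theta_j(0)\in(-1,1)\setminus\{0\}$ for all $j$. If $A\subset\mathcal{V}$ is a strongly robust polarized cluster, then $q_i(k)=q_i(0)$ for all $i\in A$ and all $k\in\mathbb{N}$.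
   Context: The neighbor set $\mathcal{N}_i$ consists of the agents $j$ with $(j,i)$ an edge of the graph. A subset $A\subset\mathcal{V}$ is a strongly robust polarized cluster if (i) $q_i(0)=q_j(0)$ for all $i,j\in A$, and (ii) for all $i\in A$, $|\mathcal{N}_i\cap A|\ge|\mathcal{N}_i\setminus A|+\frac{\beta}{1-\beta}|\mathcal{N}_i|$. *)

theory Defs
  imports Complex_Main
begin

definition nbrs :: "nat \<Rightarrow> (nat \<times> nat) set \<Rightarrow> nat \<Rightarrow> nat set" where
  "nbrs N E i = {j \<in> {1..N}. (j, i) \<in> E}"

definition strongly_robust_polarized_cluster ::
    "nat \<Rightarrow> (nat \<times> nat) set \<Rightarrow> real \<Rightarrow> (nat \<Rightarrow> real) \<Rightarrow> nat set \<Rightarrow> bool" where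
  "strongly_robust_polarized_cluster N E \<beta> q0 A \<longleftrightarrow>
     A \<subseteq> {1..N} \<and>
     (\<forall>i\<in>A. \<forall>j\<in>A. q0 i = q0 j) \<and>
     (\<forall>i\<in>A. real (card (nbrs N E i \<inter> A))
              \<ge> real (card (nbrs N E i - A)) + \<beta> / (1 - \<beta>) * real (card (nbrs N E i)))"

definition opinion_dynamics ::
    "nat \<Rightarrow> (nat \<times> nat) set \<Rightarrow> real \<Rightarrow> (nat \<Rightarrow> real) \<Rightarrow>
     (nat \<Rightarrow> nat \<Rightarrow> real) \<Rightarrow> (nat \<Rightarrow> nat \<Rightarrow> real) \<Rightarrow> bool" where
  "opinion_dynamics N E \<beta> qp theta q \<longleftrightarrow>
     (\<forall>i\<in>{1..N}. theta 0 i \<in> {-1<..<1} - {0}) \<and>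
     (\<forall>k. \<forall>i\<in>{1..N}. theta (Suc k) i =
        theta k i + (1 - (theta k i)^2) *
          (\<beta> * (qp k - theta k i)
           + (1 - \<beta>) * (1 / real (card (nbrs N E i))) *
               (\<Sum>j\<in>nbrs N E i. q k j - theta k i))) \<and>
     (\<forall>k. \<forall>j\<in>{1..N}. theta k j > 0 \<longrightarrow> q k j = 1) \<and>
     (\<forall>k. \<forall>j\<in>{1..N}. theta k j < 0 \<longrightarrow> q k j = -1) \<and>
     (\<forall>k. \<forall>j\<in>{1..N}. theta (Suc k) j = 0 \<longrightarrow> q (Suc k) j = q k j)"

end

theory Submission
  imports Defs
begin

lemma step_bounds:
  fixes t u :: real
  assumes "0 \<le> t" "t \<le> 1" "0 \<le> u" "u \<le> 1"
  shows "0 \<le> t + (1 - t^2) * (u - t) \<and> t + (1 - t^2) * (u - t) \<le> 1"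
proof -
  have h: "0 \<le> 1 - t^2" using assms by (simp add: power_le_one)
  have "(1 - t^2) * (u - t) \<ge> (1 - t^2) * (0 - t)"
    using h assms by (intro mult_left_mono) auto
  moreover have "t + (1 - t^2) * (0 - t) = t^3" by (simp add: algebra_simps power3_eq_cube power2_eq_square)
  moreover have "t^3 \<ge> 0" using assms by simp
  moreover have "(1 - t^2) * (u - t) \<le> (1 - t^2) * (1 - t)"
    using h assms by (intro mult_left_mono) auto
  moreover have "1 - (t + (1 - t^2) * (1 - t)) = (1 - t) * t^2"
    by (simp add: algebra_simps power3_eq_cube power2_eq_square)
  moreover have "(1 - t) * t^2 \<ge> 0" using assms by simp
  ultimately show ?thesis by linarith
qed

theorem mainTheorem6:
  fixes N :: nat and E :: "(nat \<times> nat) set" and \<beta> :: real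
    and qp :: "nat \<Rightarrow> real" and theta q :: "nat \<Rightarrow> nat \<Rightarrow> real" and A :: "nat set"
  assumes "\<forall>i\<in>{1..N}. nbrs N E i \<noteq> {}"
    and "0 \<le> \<beta>" and "\<beta> < 1"
    and "\<forall>k. qp k \<in> {-1, 1}"
    and "opinion_dynamics N E \<beta> qp theta q"
    and "strongly_robust_polarized_cluster N E \<beta> (q 0) A"
  shows "\<forall>i\<in>A. \<forall>k. q k i = q 0 i"
proof (cases "A = {}")
  case True then show ?thesis by simp
next
  case False
  then obtain i0 where i0: "i0 \<in> A" by blast
  note od = assms(5)[unfolded opinion_dynamics_def]
  have init: "\<forall>i\<in>{1..N}. theta 0 i \<in> {-1<..<1} - {0}" using od by blast
  have upd: "\<And>k i. i \<in> {1..N} \<Longrightarrow> theta (Suc k) i =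
        theta k i + (1 - (theta k i)^2) *
          (\<beta> * (qp k - theta k i)
           + (1 - \<beta>) * (1 / real (card (nbrs N E i))) *
               (\<Sum>j\<in>nbrs N E i. q k j - theta k i))" using od by blast
  have qpos: "\<And>k j. j \<in> {1..N} \<Longrightarrow> theta k j > 0 \<Longrightarrow> q k j = 1" using od by blast
  have qneg: "\<And>k j. j \<in> {1..N} \<Longrightarrow> theta k j < 0 \<Longrightarrow> q k j = -1" using od by blast
  have qzero: "\<And>k j. j \<in> {1..N} \<Longrightarrow> theta (Suc k) j = 0 \<Longrightarrow> q (Suc k) j = q k j" using od by blast
  note cl = assms(6)[unfolded strongly_robust_polarized_cluster_def]
  have AV: "A \<subseteq> {1..N}" using cl by blast
  have qA: "\<And>i. i \<in> A \<Longrightarrow> q 0 i = q 0 i0" using cl i0 by blast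
  have cond: "\<And>i. i \<in> A \<Longrightarrow> real (card (nbrs N E i \<inter> A))
              \<ge> real (card (nbrs N E i - A)) + \<beta> / (1 - \<beta>) * real (card (nbrs N E i))"
    using cl by blast
  have nbV: "\<And>i. nbrs N E i \<subseteq> {1..N}" unfolding nbrs_def by blast
  have finN: "\<And>i. finite (nbrs N E i)" using nbV finite_subset by blast
  have qpm: "\<forall>j\<in>{1..N}. q k j = -1 \<or> q k j = 1" for k
  proof (induction k)
    case 0
    show ?case
    proof
      fix j assume j: "j \<in> {1..N}"
      then have "theta 0 j \<noteq> 0" using init by auto
      then show "q 0 j = -1 \<or> q 0 j = 1"
        using qpos[OF j] qneg[OF j] by (cases "theta 0 j > 0") auto
    qed
  next
    case (Suc k)
    show ?case
    proof
      fix j assume j: "j \<in> {1..N}"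
      show "q (Suc k) j = -1 \<or> q (Suc k) j = 1"
        using qpos[OF j] qneg[OF j] qzero[OF j] Suc j
        by (cases "theta (Suc k) j > 0"; cases "theta (Suc k) j < 0") auto
    qed
  qed
  define c where "c = q 0 i0"
  have c: "c = -1 \<or> c = 1" using qpm[of 0] AV i0 c_def by auto
  have c2: "c * c = 1" using c by auto
  have inv: "\<forall>i\<in>A. 0 \<le> c * theta k i \<and> c * theta k i \<le> 1 \<and> q k i = c" for k
  proof (induction k)
    case 0
    show ?case
    proof
      fix i assume iA: "i \<in> A"
      then have j: "i \<in> {1..N}" using AV by blast
      have qi: "q 0 i = c" using qA[OF iA] c_def by simp
      have th: "theta 0 i \<noteq> 0" "-1 < theta 0 i" "theta 0 i < 1" using init j by auto
      show "0 \<le> c * theta 0 i \<and> c * theta 0 i \<le> 1 \<and> q 0 i = c"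
      proof (cases "theta 0 i > 0")
        case True
        then have "c = 1" using qpos[OF j] qi by simp
        then show ?thesis using True th qi by simp
      next
        case False
        then have "theta 0 i < 0" using th by simp
        then have "c = -1" using qneg[OF j] qi by simp
        then show ?thesis using \<open>theta 0 i < 0\<close> th qi by simp
      qed
    qed
  next
    case (Suc k)
    show ?case
    proof
      fix i assume iA: "i \<in> A"
      then have j: "i \<in> {1..N}" using AV by blast
      define Nb where "Nb = nbrs N E i"
      define n where "n = real (card Nb)"
      define S where "S = (\<Sum>j\<in>Nb. q k j)"
      define th where "th = theta k i"
      define s where "s = \<beta> * qp k + (1 - \<beta>) * (S / n)"
      have finNb: "finite Nb" using finN Nb_def by simp
      have npos: "n > 0" using assms(1) j finNb unfolding n_def Nb_def
        by (simp add: card_gt_0_iff)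
      have sum_eq: "(\<Sum>j\<in>Nb. q k j - th) = S - n * th"
        unfolding S_def n_def by (simp add: sum_subtractf)
      have thS: "theta (Suc k) i = th + (1 - th^2) * (s - th)"
        unfolding upd[OF j] s_def th_def[symmetric] Nb_def[symmetric] n_def[symmetric] sum_eq
        using npos by (simp add: field_simps)
      have qNb: "\<And>j. j \<in> Nb \<Longrightarrow> q k j = -1 \<or> q k j = 1"
        using qpm nbV Nb_def by blast
      have cS_le: "c * S \<le> n"
      proof -
        have "c * S = (\<Sum>j\<in>Nb. c * q k j)" unfolding S_def by (simp add: sum_distrib_left)
        also have "\<dots> \<le> (\<Sum>j\<in>Nb. 1)"
          by (rule sum_mono) (use qNb c in force)
        finally show ?thesis unfolding n_def by simp
      qed
      have cS_ge: "c * S \<ge> real (card (Nb \<inter> A)) - real (card (Nb - A))"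
      proof -
        have "c * S = (\<Sum>j\<in>Nb. c * q k j)" unfolding S_def by (simp add: sum_distrib_left)
        also have "\<dots> = (\<Sum>j\<in>Nb \<inter> A. c * q k j) + (\<Sum>j\<in>Nb - A. c * q k j)"
          using finNb by (metis sum.Int_Diff)
        also have "(\<Sum>j\<in>Nb \<inter> A. c * q k j) = (\<Sum>j\<in>Nb \<inter> A. 1)"
          by (intro sum.cong) (use Suc c2 in auto)
        also have "(\<Sum>j\<in>Nb - A. c * q k j) \<ge> (\<Sum>j\<in>Nb - A. -1)"
          by (rule sum_mono) (use qNb c in force)
        ultimately show ?thesis by simp
      qed
      have condi: "real (card (Nb \<inter> A)) \<ge> real (card (Nb - A)) + \<beta> / (1 - \<beta>) * n"
        using cond[OF iA] unfolding Nb_def n_def .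
      have b1: "1 - \<beta> > 0" using assms(3) by simp
      have "(1 - \<beta>) * (real (card (Nb \<inter> A)) - real (card (Nb - A))) \<ge> \<beta> * n"
      proof -
        have "(1 - \<beta>) * (real (card (Nb \<inter> A)) - real (card (Nb - A))) \<ge> (1 - \<beta>) * (\<beta> / (1 - \<beta>) * n)"
          using condi b1 by (intro mult_left_mono) auto
        also have "(1 - \<beta>) * (\<beta> / (1 - \<beta>) * n) = \<beta> * n" using b1 by simp
        finally show ?thesis .
      qed
      then have "(1 - \<beta>) * (c * S) \<ge> \<beta> * n"
        using cS_ge b1 by (smt (verit) mult_left_mono)
      then have A1: "(1 - \<beta>) * (c * S / n) \<ge> \<beta>"
        using npos by (simp add: field_simps)
      have "c * S / n \<le> 1" using cS_le npos by simp
      then have A2: "(1 - \<beta>) * (c * S / n) \<le> (1 - \<beta>)"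
        using b1 mult_left_mono[of "c * S / n" 1 "1 - \<beta>"] by simp
      have qpk: "qp k = -1 \<or> qp k = 1" using assms(4) by auto
      have cs: "c * s = \<beta> * (c * qp k) + (1 - \<beta>) * (c * S / n)"
        unfolding s_def by (simp add: algebra_simps)
      have cqp: "-1 \<le> c * qp k \<and> c * qp k \<le> 1" using qpk c by auto
      have "\<beta> * (c * qp k) \<ge> - \<beta>" "\<beta> * (c * qp k) \<le> \<beta>"
        using cqp assms(2) mult_left_mono[of "-1" "c * qp k" \<beta>] mult_left_mono[of "c * qp k" 1 \<beta>]
        by auto
      then have u: "0 \<le> c * s" "c * s \<le> 1" using cs A1 A2 by linarith+
      have t: "0 \<le> c * th" "c * th \<le> 1" "q k i = c" using Suc iA th_def by auto
      have tsq: "th^2 = (c * th)^2" using c by auto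
      have eq: "c * theta (Suc k) i = c * th + (1 - (c * th)^2) * (c * s - c * th)"
        unfolding thS tsq by (simp add: algebra_simps)
      have bnd: "0 \<le> c * theta (Suc k) i \<and> c * theta (Suc k) i \<le> 1"
        unfolding eq using step_bounds[OF t(1) t(2) u] .
      have "q (Suc k) i = c"
      proof (cases "theta (Suc k) i > 0")
        case True
        then have "c = 1" using bnd c by auto
        then show ?thesis using qpos[OF j True] by simp
      next
        case False
        show ?thesis
        proof (cases "theta (Suc k) i < 0")
          case True
          then have "c = -1" using bnd c by auto
          then show ?thesis using qneg[OF j True] by simp
        next
          case False2: False
          then have "theta (Suc k) i = 0" using False by simp
          then show ?thesis using qzero[OF j] t(3) by simp
        qed
      qed
      then show "0 \<le> c * theta (Suc k) i \<and> c * theta (Suc k) i \<le> 1 \<and> q (Suc k) i = c"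
        using bnd by simp
    qed
  qed
  show ?thesis
  proof (intro ballI allI)
    fix i k assume iA: "i \<in> A"
    show "q k i = q 0 i" using inv[of k] inv[of 0] iA by auto
  qed
qed

end
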